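(* Consider the coupled jump dynamics on the state space $S$ described below. For every state $(\underline x,I,\underline y,J,N)\in S$ and every one of the four types of jumps, the state $(\underline x',I',\underline y',J',N')$ after the jump belongs to $S$, and $I'\setminus I'_=\subseteq I\setminus I_=$. Moreover, in a death event, for every $i\in I\cap I'$ one has $|x'_i-y'_i|\le|x_i-y_i|$.
   Context: Fix $j>0$, $\varepsilon>0$ with $\varepsilon^{-1}\in\mathbb N$, $\Lambda_\varepsilon=\{0,\dots,\varepsilon^{-1}\}$, and integers $n>0$, $m\ge0$. A labeled configuration is a pair $(\underline x,I)$ with $I\subset\mathbb N$ finite and $\underline x=(x_i)_{i\in I}$, $x_i\in\Lambda_\varepsilon$. The state space $S$ consists of all $(\underline x,I,\underline y,J,N)$ with $(\underline x,I),(\underline y,J)$ labeled configurations, $I\subset J$, $|J\setminus I|\le m$, $N=\max J$. Let $I_==\{i\in I:x_i=y_i\}$. Jumps from $(\underline x,I,\underline y,J,N)$: (1) Single random-walk jumps: for each $i\in I\setminus I_=$ and each sign $\pm$, at rate $1/2$, $x_i\to x_i\pm1$ (suppressed if $x_i\pm1\notin\Lambda_\varepsilon$), everything else unchanged; for each $i\in J\setminus I_=$ and each sign, at rate $1/2$, $y_i\to y_i\pm1$ (suppressed if outside $\Lambda_\varepsilon$), everything else unchanged. (2) Double random-walk jumps: for each $i\in I_=$ and each sign, at rate $1/2$, both $x_i$ and $y_i$ move to $x_i\pm1$ (suppressed if outside $\Lambda_\varepsilon$). (3) Creation: at rate $\varepsilon j$, $N'=N+1$, $I'=I\cup\{N+1\}$,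 $J'=J\cup\{N+1\}$, $x'_{N+1}=y'_{N+1}=0$, other positions unchanged. (4) Death: at rate $\varepsilon j$, $N$ unchanged; let $i$ be the largest label among the particles of $\underline x$ at the rightmost occupied site of $\underline x$, and $k$ the largest label among the particles of $\underline y$ at the rightmost occupied site of $\underline y$; remove label $i$ from $\underline x$ (and from $I$) and label $k$ from $\underline y$ (and from $J$). If $k\notin I$ or $i=k$, stop. If $i\ne k$ and $k\in I$: if $x_k\le y_i$, the $\underline y$-particle labeled $i$ is relabeled $k$ (so label $i$ disappears from both $I$ and $J$); if $y_i<x_k$, the $\underline x$-particle labeled $k$ is relabeled $i$ (so label $k$ disappears from both $I$ and $J$).
   Formalization: In the state space S, the condition $N=\max J$ is replaced by the requirement that every label in J is at most N. The statement above fails without it. *)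

theory Defs
  imports Main
begin

text \<open>Positions in \<Lambda>_eps = {0..M} with M = eps^{-1}; stored as integers.
  A state (x, I, y, J, N): x, y are position functions (only their values on
  I resp. J matter), I, J label sets, N the label counter.\<close>

type_synonym state = "(nat \<Rightarrow> int) \<times> nat set \<times> (nat \<Rightarrow> int) \<times> nat set \<times> nat"

definition in_Lambda :: "nat \<Rightarrow> int \<Rightarrow> bool" where
  "in_Lambda M z \<longleftrightarrow> 0 \<le> z \<and> z \<le> int M"

definition in_S :: "nat \<Rightarrow> nat \<Rightarrow> state \<Rightarrow> bool" where
  "in_S M m s = (case s of (x, I, y, J, N) \<Rightarrow>
     finite J \<and> I \<subseteq> J \<and> card (J - I) \<le> m \<and> (\<forall>l\<in>J. l \<le> N) \<and>
     (\<forall>i\<in>I. in_Lambda M (x i)) \<and> (\<forall>i\<in>J. in_Lambda M (y i)))"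

definition Ieq :: "state \<Rightarrow> nat set" where
  "Ieq s = (case s of (x, I, y, J, N) \<Rightarrow> {i\<in>I. x i = y i})"

definition Iset :: "state \<Rightarrow> nat set" where
  "Iset s = (case s of (x, I, y, J, N) \<Rightarrow> I)"

definition move :: "nat \<Rightarrow> (nat \<Rightarrow> int) \<Rightarrow> nat \<Rightarrow> int \<Rightarrow> nat \<Rightarrow> int" where
  "move M z i d = (if in_Lambda M (z i + d) then z(i := z i + d) else z)"

definition single_jumps :: "nat \<Rightarrow> state \<Rightarrow> state set" where
  "single_jumps M s = (case s of (x, I, y, J, N) \<Rightarrow>
     {(move M x i d, I, y, J, N) | i d. i \<in> I - Ieq s \<and> d \<in> {-1, 1}} \<union>
     {(x, I, move M y i d, J, N) | i d. i \<in> J - Ieq s \<and> d \<in> {-1, 1}})"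

definition double_jumps :: "nat \<Rightarrow> state \<Rightarrow> state set" where
  "double_jumps M s = (case s of (x, I, y, J, N) \<Rightarrow>
     {(if in_Lambda M (x i + d) then (x(i := x i + d), I, y(i := x i + d), J, N)
       else (x, I, y, J, N)) | i d. i \<in> Ieq s \<and> d \<in> {-1, 1}})"

definition creation :: "state \<Rightarrow> state" where
  "creation s = (case s of (x, I, y, J, N) \<Rightarrow>
     (x(N + 1 := 0), insert (N + 1) I, y(N + 1 := 0), insert (N + 1) J, N + 1))"

definition top_label :: "(nat \<Rightarrow> int) \<Rightarrow> nat set \<Rightarrow> nat" where
  "top_label z K = Max {l \<in> K. z l = Max (z ` K)}"

definition death :: "state \<Rightarrow> state" where
  "death s = (case s of (x, I, y, J, N) \<Rightarrow>
     if J = {} then s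
     else if I = {} then (x, I, y, J - {top_label y J}, N)
     else (let i = top_label x I; k = top_label y J in
       if k \<notin> I \<or> i = k then (x, I - {i}, y, J - {k}, N)
       else if x k \<le> y i then (x, I - {i}, y(k := y i), J - {i}, N)
       else (x(i := x k), I - {k}, y, J - {k}, N)))"

end

theory Submission
  imports Defs
begin

lemma top_label_props:
  assumes "finite K" "K \<noteq> {}"
  shows "top_label z K \<in> K" "z (top_label z K) = Max (z ` K)" "\<forall>l\<in>K. z l \<le> z (top_label z K)"
proof -
  have "Max (z ` K) \<in> z ` K" using assms by simp
  then have ne: "{l \<in> K. z l = Max (z ` K)} \<noteq> {}" by auto
  have fin: "finite {l \<in> K. z l = Max (z ` K)}" using assms by simp
  have m: "top_label z K \<in> {l \<in> K. z l = Max (z ` K)}"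
    unfolding top_label_def using Max_in[OF fin ne] .
  then show "top_label z K \<in> K" "z (top_label z K) = Max (z ` K)" by auto
  show "\<forall>l\<in>K. z l \<le> z (top_label z K)" using m assms by auto
qed

lemma single_ok:
  assumes "in_S M m s" "s' \<in> single_jumps M s"
  shows "in_S M m s' \<and> Iset s' - Ieq s' \<subseteq> Iset s - Ieq s"
proof -
  obtain x I y J N where s: "s = (x, I, y, J, N)" by (cases s) auto
  from assms(2) consider (a) i d where "i \<in> I - Ieq s" "s' = (move M x i d, I, y, J, N)"
    | (b) i d where "i \<in> J - Ieq s" "s' = (x, I, move M y i d, J, N)"
    unfolding single_jumps_def s by auto
  then show ?thesis
  proof cases
    case a
    then show ?thesis using assms(1) unfolding s in_S_def Ieq_def Iset_def move_def
      by auto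
  next
    case b
    then show ?thesis using assms(1) unfolding s in_S_def Ieq_def Iset_def move_def
      by auto
  qed
qed

lemma double_ok:
  assumes "in_S M m s" "s' \<in> double_jumps M s"
  shows "in_S M m s' \<and> Iset s' - Ieq s' \<subseteq> Iset s - Ieq s"
proof -
  obtain x I y J N where s: "s = (x, I, y, J, N)" by (cases s) auto
  from assms(2) obtain i d where i: "i \<in> Ieq s" and
    s': "s' = (if in_Lambda M (x i + d) then (x(i := x i + d), I, y(i := x i + d), J, N)
       else (x, I, y, J, N))"
    unfolding double_jumps_def s by auto
  show ?thesis using assms(1) i unfolding s' s in_S_def Ieq_def Iset_def
    by auto
qed

lemma creation_ok:
  assumes "in_S M m s"
  shows "in_S M m (creation s) \<and> Iset (creation s) - Ieq (creation s) \<subseteq> Iset s - Ieq s"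
proof -
  obtain x I y J N where s: "s = (x, I, y, J, N)" by (cases s) auto
  have nJ: "N + 1 \<notin> J" using assms unfolding s in_S_def by auto
  have "insert (N + 1) J - insert (N + 1) I = J - I" using nJ by auto
  then show ?thesis using assms nJ unfolding s creation_def in_S_def Ieq_def Iset_def in_Lambda_def
    by auto
qed

lemma death_ok:
  assumes "in_S M m s"
  shows "(in_S M m (death s) \<and> Iset (death s) - Ieq (death s) \<subseteq> Iset s - Ieq s)
       \<and> (case s of (x, I, y, J, N) \<Rightarrow> (case death s of (x', I', y', J', N') \<Rightarrow>
            \<forall>i \<in> I \<inter> I'. \<bar>x' i - y' i\<bar> \<le> \<bar>x i - y i\<bar>))"
proof -
  obtain x I y J N where s: "s = (x, I, y, J, N)" by (cases s) auto
  have finJ: "finite J" and IJ: "I \<subseteq> J" and cJI: "card (J - I) \<le> m"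
    and NJ: "\<forall>l\<in>J. l \<le> N" and Lx: "\<forall>i\<in>I. in_Lambda M (x i)" and Ly: "\<forall>i\<in>J. in_Lambda M (y i)"
    using assms unfolding s in_S_def by auto
  have finI: "finite I" using finJ IJ finite_subset by blast
  show ?thesis
  proof (cases "J = {}")
    case True
    then show ?thesis using assms unfolding s death_def by auto
  next
    case Jne: False
    show ?thesis
    proof (cases "I = {}")
      case True
      have "card (J - {top_label y J}) \<le> card J" using finJ by (simp add: card_Diff1_le)
      then show ?thesis using Jne True finJ cJI NJ Ly
        unfolding s death_def in_S_def Ieq_def Iset_def by auto
    next
      case Ine: False
      define i where "i = top_label x I"
      define k where "k = top_label y J"
      have iI: "i \<in> I" and ximax: "\<forall>l\<in>I. x l \<le> x i"
        using top_label_props[OF finI Ine, of x] unfolding i_def by auto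
      have kJ: "k \<in> J" and ykmax: "\<forall>l\<in>J. y l \<le> y k"
        using top_label_props[OF finJ Jne, of y] unfolding k_def by auto
      have d: "death (x, I, y, J, N) = (if k \<notin> I \<or> i = k then (x, I - {i}, y, J - {k}, N)
        else if x k \<le> y i then (x, I - {i}, y(k := y i), J - {i}, N)
        else (x(i := x k), I - {k}, y, J - {k}, N))"
        unfolding s death_def using Jne Ine by (simp add: i_def k_def Let_def)
      consider (c1) "k \<notin> I \<or> i = k" | (c2) "k \<in> I" "i \<noteq> k" "x k \<le> y i"
        | (c3) "k \<in> I" "i \<noteq> k" "\<not> x k \<le> y i" by blast
      then show ?thesis
      proof cases
        case c1
        have card: "card ((J - {k}) - (I - {i})) \<le> card (J - I)"
        proof (cases "i = k")
          case True
          then have "(J - {k}) - (I - {i}) \<subseteq> J - I" by auto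
          then show ?thesis using finJ by (simp add: card_mono)
        next
          case False
          then have kn: "k \<notin> I" using c1 by auto
          have eq: "(J - {k}) - (I - {i}) = insert i ((J - I) - {k})" using False iI IJ kn by auto
          have "card (insert i ((J - I) - {k})) \<le> Suc (card ((J - I) - {k}))"
            by (simp add: card_insert_le_m1)
          also have "card ((J - I) - {k}) = card (J - I) - 1" using kJ kn finJ by simp
          also have "card (J - I) \<ge> 1"
          proof -
            have "k \<in> J - I" using kJ kn by auto
            then show ?thesis using finJ by (metis One_nat_def Suc_leI card_gt_0_iff empty_iff finite_Diff)
          qed
          then have "Suc (card (J - I) - 1) = card (J - I)" by simp
          finally show ?thesis using eq by simp
        qed
        have sub: "I - {i} \<subseteq> J - {k}" using c1 IJ by auto
        show ?thesis using c1 card cJI sub finJ NJ Lx Ly unfolding d s in_S_def Ieq_def Iset_def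
          by auto
      next
        case c2
        have eq: "(J - {i}) - (I - {i}) = J - I" using iI by auto
        have yik: "y i \<le> y k" using ykmax iI IJ by auto
        have key: "x k = y k \<Longrightarrow> x k = y i" using c2 yik by auto
        have abs: "\<bar>x k - y i\<bar> \<le> \<bar>x k - y k\<bar>" using c2 yik by auto
        have Lyi: "in_Lambda M (y i)" using Ly iI IJ by auto
        show ?thesis using c2 eq cJI IJ finJ NJ Lx Ly Lyi key abs
          unfolding d s in_S_def Ieq_def Iset_def by auto
      next
        case c3
        have eq: "(J - {k}) - (I - {k}) = J - I" using c3 by auto
        have xki: "x k \<le> x i" using ximax c3 by auto
        have abs: "\<bar>x k - y i\<bar> \<le> \<bar>x i - y i\<bar>" using c3 xki by auto
        have Lxk: "in_Lambda M (x k)" using Lx c3 by auto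
        show ?thesis using c3 eq cJI IJ finJ NJ Lx Ly Lxk xki abs
          unfolding d s in_S_def Ieq_def Iset_def by auto
      qed
    qed
  qed
qed

theorem lemma4p2:
  fixes M m :: nat and s :: state
  assumes "M > 0" and "in_S M m s"
  shows "(\<forall>s' \<in> single_jumps M s \<union> double_jumps M s \<union> {creation s, death s}.
            in_S M m s' \<and> Iset s' - Ieq s' \<subseteq> Iset s - Ieq s)
       \<and> (case s of (x, I, y, J, N) \<Rightarrow> (case death s of (x', I', y', J', N') \<Rightarrow>
            \<forall>i \<in> I \<inter> I'. \<bar>x' i - y' i\<bar> \<le> \<bar>x i - y i\<bar>))"
proof -
  have A: "\<forall>s' \<in> single_jumps M s \<union> double_jumps M s \<union> {creation s, death s}.
            in_S M m s' \<and> Iset s' - Ieq s' \<subseteq> Iset s - Ieq s"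
  proof
    fix s' assume "s' \<in> single_jumps M s \<union> double_jumps M s \<union> {creation s, death s}"
    then consider "s' \<in> single_jumps M s" | "s' \<in> double_jumps M s" | "s' = creation s" | "s' = death s"
      by blast
    then show "in_S M m s' \<and> Iset s' - Ieq s' \<subseteq> Iset s - Ieq s"
      using single_ok[OF assms(2)] double_ok[OF assms(2)] creation_ok[OF assms(2)] death_ok[OF assms(2)]
      by cases blast+
  qed
  show ?thesis by (rule conjI[OF A conjunct2[OF death_ok[OF assms(2)]]])
qed

end
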